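(* Every bounded complex spectral family $E$ in a complete lattice $\mathbb{L}$ is decomposable, i.e. there are spectral families $E^1,E^2$ in $\mathbb{L}$ such that $E_{\lambda,\mu}=E^1_\lambda\wedge E^2_\mu$ for all $\lambda,\mu\in\mathbb{R}$.
   Context: $\mathbb{L}$ has least element $0$ and greatest element $1$. A (real) spectral family is a map $F:\mathbb{R}\to\mathbb{L}$ with $F_\lambda\le F_\mu$ for $\lambda\le\mu$, $F_\lambda=\bigwedge_{\mu>\lambda}F_\mu$, $\bigwedge_\lambda F_\lambda=0$, $\bigvee_\lambda F_\lambda=1$. A complex spectral family is a map $E:\mathbb{R}^2\to\mathbb{L}$ with (i) $E_{\lambda_1,\lambda_2}\wedge E_{\mu_1,\mu_2}=E_{\min\{\lambda_1,\mu_1\},\min\{\lambda_2,\mu_2\}}$; (ii) $\bigwedge_{\lambda_1<\mu_1,\lambda_2<\mu_2}E_{\mu_1,\mu_2}=E_{\lambda_1,\lambda_2}$; (iii) $\bigwedge_\lambda E_{\lambda,\lambda_2}=0=\bigwedge_\lambda E_{\lambda_1,\lambda}$ for all $\lambda_1,\lambda_2$, and $\bigvee_{\lambda_1,\lambda_2}E_{\lambda_1,\lambda_2}=1$. It is bounded if there are $m,b\in\mathbb{R}$ with $E_{\lambda_1,\lambda_2}=0$ whenever $\lambda_1\le m$ or $\lambda_2\le m$, and $E_{\lambda_1,\lambda_2}=1$ whenever $\lambda_1,\lambda_2\ge b$. *)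

theory Defs
  imports Main "HOL.Real"
begin

definition spectral_family :: "(real \<Rightarrow> 'a::complete_lattice) \<Rightarrow> bool" where
  "spectral_family F \<longleftrightarrow>
     (\<forall>l m. l \<le> m \<longrightarrow> F l \<le> F m) \<and>
     (\<forall>l. F l = (INF m\<in>{l<..}. F m)) \<and>
     (INF l. F l) = bot \<and>
     (SUP l. F l) = top"

definition complex_spectral_family :: "(real \<Rightarrow> real \<Rightarrow> 'a::complete_lattice) \<Rightarrow> bool" where
  "complex_spectral_family E \<longleftrightarrow>
     (\<forall>l1 l2 m1 m2. inf (E l1 l2) (E m1 m2) = E (min l1 m1) (min l2 m2)) \<and>
     (\<forall>l1 l2. Inf {E m1 m2 | m1 m2. l1 < m1 \<and> l2 < m2} = E l1 l2) \<and>
     (\<forall>l2. (INF l. E l l2) = bot) \<and>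
     (\<forall>l1. (INF l. E l1 l) = bot) \<and>
     Sup {E l1 l2 | l1 l2. True} = top"

definition bounded_complex_spectral_family :: "(real \<Rightarrow> real \<Rightarrow> 'a::complete_lattice) \<Rightarrow> bool" where
  "bounded_complex_spectral_family E \<longleftrightarrow>
     complex_spectral_family E \<and>
     (\<exists>c b. (\<forall>l1 l2. l1 \<le> c \<or> l2 \<le> c \<longrightarrow> E l1 l2 = bot) \<and>
            (\<forall>l1 l2. l1 \<ge> b \<and> l2 \<ge> b \<longrightarrow> E l1 l2 = top))"

end

theory Submission
  imports Defs
begin

theorem proposition2p20:
  fixes E :: "real \<Rightarrow> real \<Rightarrow> 'a::complete_lattice"
  assumes "bounded_complex_spectral_family E"
  shows "\<exists>E1 E2 :: real \<Rightarrow> 'a. spectral_family E1 \<and> spectral_family E2 \<and>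
           (\<forall>l m. E l m = inf (E1 l) (E2 m))"
proof -
  have cs: "complex_spectral_family E" using assms unfolding bounded_complex_spectral_family_def by blast
  obtain c b where top: "\<And>l1 l2. l1 \<ge> b \<Longrightarrow> l2 \<ge> b \<Longrightarrow> E l1 l2 = top"
    using assms unfolding bounded_complex_spectral_family_def by blast
  have meet: "\<And>x y u v. inf (E x y) (E u v) = E (min x u) (min y v)"
    using cs unfolding complex_spectral_family_def by blast
  have rc: "\<And>l1 l2. Inf {E m1 m2 | m1 m2. l1 < m1 \<and> l2 < m2} = E l1 l2"
    using cs unfolding complex_spectral_family_def by blast
  have b1: "\<And>l2. (INF l. E l l2) = bot" and b2: "\<And>l1. (INF l. E l1 l) = bot"
    using cs unfolding complex_spectral_family_def by blast+
  have mono: "\<And>x y u v. x \<le> u \<Longrightarrow> y \<le> v \<Longrightarrow> E x y \<le> E u v"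
  proof -
    fix x y u v :: real assume "x \<le> u" "y \<le> v"
    then have "inf (E x y) (E u v) = E x y" using meet[of x y u v] by simp
    then show "E x y \<le> E u v" by (simp add: le_iff_inf)
  qed
  have red: "\<And>x y. E x y = E (min x b) (min y b)"
  proof -
    fix x y
    have "E x y = inf (E x y) (E b b)" using top[of b b] by simp
    then show "E x y = E (min x b) (min y b)" using meet by simp
  qed
  have r1: "E x y = E x b" if "y \<ge> b" for x y
  proof -
    have "min y b = b" "min b b = b" using that by simp_all
    then show ?thesis using red[of x y] red[of x b] by metis
  qed
  have r2: "E x y = E b y" if "x \<ge> b" for x y
  proof -
    have "min x b = b" "min b b = b" using that by simp_all
    then show ?thesis using red[of x y] red[of b y] by metis
  qed
  have s1: "{E m1 m2 | m1 m2. l < m1 \<and> b < m2} = (\<lambda>m. E m b) ` {l<..}" for l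
  proof
    show "{E m1 m2 | m1 m2. l < m1 \<and> b < m2} \<subseteq> (\<lambda>m. E m b) ` {l<..}"
    proof
      fix z assume "z \<in> {E m1 m2 | m1 m2. l < m1 \<and> b < m2}"
      then obtain m1 m2 where "z = E m1 m2" "l < m1" "b < m2" by blast
      then have "z = E m1 b" using r1[of m2 m1] by simp
      with \<open>l < m1\<close> show "z \<in> (\<lambda>m. E m b) ` {l<..}" by blast
    qed
    show "(\<lambda>m. E m b) ` {l<..} \<subseteq> {E m1 m2 | m1 m2. l < m1 \<and> b < m2}"
    proof
      fix z assume "z \<in> (\<lambda>m. E m b) ` {l<..}"
      then obtain m where "m > l" "z = E m b" by auto
      then have "z = E m (b+1)" "b < b + 1" using r1[of "b+1" m] by simp_all
      with \<open>m > l\<close> show "z \<in> {E m1 m2 | m1 m2. l < m1 \<and> b < m2}" by blast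
    qed
  qed
  have s2: "{E m1 m2 | m1 m2. b < m1 \<and> l < m2} = (\<lambda>m. E b m) ` {l<..}" for l
  proof
    show "{E m1 m2 | m1 m2. b < m1 \<and> l < m2} \<subseteq> (\<lambda>m. E b m) ` {l<..}"
    proof
      fix z assume "z \<in> {E m1 m2 | m1 m2. b < m1 \<and> l < m2}"
      then obtain m1 m2 where "z = E m1 m2" "b < m1" "l < m2" by blast
      then have "z = E b m2" using r2[of m1 m2] by simp
      with \<open>l < m2\<close> show "z \<in> (\<lambda>m. E b m) ` {l<..}" by blast
    qed
    show "(\<lambda>m. E b m) ` {l<..} \<subseteq> {E m1 m2 | m1 m2. b < m1 \<and> l < m2}"
    proof
      fix z assume "z \<in> (\<lambda>m. E b m) ` {l<..}"
      then obtain m where "m > l" "z = E b m" by auto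
      then have "z = E (b+1) m" "b < b + 1" using r2[of "b+1" m] by simp_all
      with \<open>m > l\<close> show "z \<in> {E m1 m2 | m1 m2. b < m1 \<and> l < m2}" by blast
    qed
  qed
  have sf1: "spectral_family (\<lambda>l. E l b)"
    unfolding spectral_family_def
  proof (intro conjI allI impI)
    show "E l b \<le> E m b" if "l \<le> m" for l m using mono that by simp
    show "E l b = (INF m\<in>{l<..}. E m b)" for l using rc[of l b] s1[of l] by simp
    show "(INF l. E l b) = bot" by (rule b1)
    have "E b b \<le> (SUP l. E l b)" by (rule SUP_upper) simp
    then show "(SUP l. E l b) = top" using top[of b b] by (simp add: top_unique)
  qed
  have sf2: "spectral_family (\<lambda>l. E b l)"
    unfolding spectral_family_def
  proof (intro conjI allI impI)
    show "E b l \<le> E b m" if "l \<le> m" for l m using mono that by simp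
    show "E b l = (INF m\<in>{l<..}. E b m)" for l using rc[of b l] s2[of l] by simp
    show "(INF l. E b l) = bot" by (rule b2)
    have "E b b \<le> (SUP l. E b l)" by (rule SUP_upper) simp
    then show "(SUP l. E b l) = top" using top[of b b] by (simp add: top_unique)
  qed
  have dec: "E l m = inf (E l b) (E b m)" for l m
  proof -
    have "min b b = b" by simp
    then show ?thesis using red[of l m] meet[of l b b m] min.commute[of b m] by metis
  qed
  show ?thesis using sf1 sf2 dec by blast
qed

end
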